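(* Let $A_1,\dots,A_N\in\mathbb{R}^{2\times2}$ with $\det[A_j,A_k]=0$ for all $j\ne k$, and assume $A_1$ has non-real eigenvalues. Then there exists $S\in GL(2,\mathbb{R})$ such that $$S^{-1}A_jS=\begin{pmatrix}s_j&-t_j\\t_j&s_j\end{pmatrix},\qquad j=1,\dots,N,$$ for some $s_j,t_j\in\mathbb{R}$.
   Context: $[A,B]=AB-BA$. *)

theory Defs
  imports "HOL-Analysis.Analysis"
begin

definition commutator :: "'a::comm_ring_1^'n^'n \<Rightarrow> 'a^'n^'n \<Rightarrow> 'a^'n^'n" where
  "commutator A B = A ** B - B ** A"

definition cmat :: "real^'n^'m \<Rightarrow> complex^'n^'m" where
  "cmat A = (\<chi> i j. complex_of_real (A $ i $ j))"

definition complex_eigenvalue :: "real^'n^'n \<Rightarrow> complex \<Rightarrow> bool" where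
  "complex_eigenvalue A z \<longleftrightarrow> det (cmat A - mat z) = 0"

end

theory Submission
  imports Defs
begin

lemma mm2: "((P::real^2^2) ** Q) $ i $ j = P$i$1*Q$1$j + P$i$2*Q$2$j"
  by (simp add: matrix_matrix_mult_def sum_2)

lemma eq2: "(P::real^2^2) = Q \<longleftrightarrow> P$1$1 = Q$1$1 \<and> P$1$2 = Q$1$2 \<and> P$2$1 = Q$2$1 \<and> P$2$2 = Q$2$2"
  by (auto simp: vec_eq_iff forall_2)

lemma mdl: "(P::real^'n^'n) ** (Q - R) = P ** Q - P ** R"
  by (simp add: vec_eq_iff matrix_matrix_mult_def sum_subtractf algebra_simps)
lemma mdr: "((Q::real^'n^'n) - R) ** P = Q ** P - R ** P"
  by (simp add: vec_eq_iff matrix_matrix_mult_def sum_subtractf algebra_simps)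

lemma inv_props:
  fixes S :: "real^2^2"
  assumes "invertible S"
  shows "S ** matrix_inv S = mat 1" "matrix_inv S ** S = mat 1"
  using someI_ex[OF assms[unfolded invertible_def]] unfolding matrix_inv_def by auto

theorem lemma2p8:
  fixes N :: nat and A :: "nat \<Rightarrow> real^2^2"
  assumes "N \<ge> 1"
    and "\<forall>j\<in>{1..N}. \<forall>k\<in>{1..N}. j \<noteq> k \<longrightarrow> det (commutator (A j) (A k)) = 0"
    and "\<exists>z. complex_eigenvalue (A 1) z \<and> Im z \<noteq> 0"
  shows "\<exists>S :: real^2^2. invertible S \<and>
           (\<forall>j\<in>{1..N}. \<exists>s t :: real.
              matrix_inv S ** A j ** S = (\<chi> i k. if i = k then s else if i = 1 then - t else t))"
proof -
  obtain z where z: "complex_eigenvalue (A 1) z" "Im z \<noteq> 0" using assms(3) by blast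
  define x where "x = Re z"
  define y where "y = Im z"
  define a where "a = A 1"
  have zz: "z = Complex x y" by (simp add: x_def y_def)
  have "det (cmat a - mat z) = 0" using z(1) by (simp add: complex_eigenvalue_def a_def)
  hence "(complex_of_real (a$1$1) - z) * (complex_of_real (a$2$2) - z) - complex_of_real (a$1$2) * complex_of_real (a$2$1) = 0"
    by (simp add: det_2 cmat_def mat_def)
  hence e: "(a$1$1 - x)*(a$2$2 - x) - y*y - a$1$2*a$2$1 = 0" "y * ((a$1$1 - x) + (a$2$2 - x)) = 0"
    unfolding zz by (simp_all add: complex_eq_iff algebra_simps)
  have y0: "y \<noteq> 0" using z(2) y_def by simp
  have tr: "a$2$2 = 2*x - a$1$1" using e(2) y0 by simp
  define d where "d = a$1$1 - x"
  define c where "c = a$2$1"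
  have bc: "a$1$2 * c = - d*d - y*y" using e(1) tr unfolding c_def d_def by (simp add: algebra_simps)
  have c0: "c \<noteq> 0"
  proof
    assume "c = 0"
    hence "d*d + y*y = 0" using bc by (simp add: algebra_simps)
    moreover have "y*y > 0" using y0 by (auto simp add: zero_less_mult_iff linorder_neq_iff)
    moreover have "d*d \<ge> 0" by simp
    ultimately show False by linarith
  qed
  define S :: "real^2^2" where "S = (\<chi> i j. if i = 1 then (if j = 1 then 1 else d/y) else (if j = 1 then 0 else c/y))"
  have S: "S$1$1 = 1" "S$1$2 = d/y" "S$2$1 = 0" "S$2$2 = c/y" by (simp_all add: S_def)
  have invS: "invertible S" unfolding invertible_det_nz det_2 S using c0 y0 by simp
  note I = inv_props[OF invS]
  define M :: "real^2^2" where "M = (\<chi> i k. if i = k then x else if i = 1 then - y else y)"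
  have M: "M$1$1 = x" "M$1$2 = -y" "M$2$1 = y" "M$2$2 = x" by (simp_all add: M_def)
  have aS: "a ** S = S ** M"
    unfolding eq2 mm2 S M using y0 bc unfolding c_def d_def tr
    apply (intro conjI)
    apply (simp_all add: field_simps)
    done
  have conj: "matrix_inv S ** a ** S = M"
    by (metis I(2) aS matrix_mul_assoc matrix_mul_lid)
  show ?thesis
  proof (rule exI[of _ S], intro conjI ballI)
    show "invertible S" by fact
    fix j assume j: "j \<in> {1..N}"
    define B where "B = matrix_inv S ** A j ** S"
    have "det (commutator M B) = 0"
    proof (cases "j = 1")
      case True
      thus ?thesis using conj by (simp add: B_def a_def commutator_def det_2)
    next
      case False
      have d0: "det (commutator a (A j)) = 0" using assms(2) j False assms(1) a_def by auto
      have "commutator M B = matrix_inv S ** commutator a (A j) ** S"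
      proof -
        have k: "\<And>P Q. (matrix_inv S ** P ** S) ** (matrix_inv S ** Q ** S) = matrix_inv S ** (P ** Q) ** S"
          by (metis I(1) matrix_mul_assoc matrix_mul_rid)
        show ?thesis unfolding commutator_def B_def conj[symmetric] k by (simp add: mdl mdr)
      qed
      thus ?thesis by (simp add: det_mul d0)
    qed
    hence "y*y*(- ((B$2$1+B$1$2)*(B$2$1+B$1$2)) - (B$1$1-B$2$2)*(B$1$1-B$2$2)) = 0"
      unfolding commutator_def det_2 by (simp add: mm2 M algebra_simps power2_eq_square)
    hence "(B$2$1+B$1$2)*(B$2$1+B$1$2) + (B$1$1-B$2$2)*(B$1$1-B$2$2) = 0"
    proof -
      have "y*y \<noteq> 0" using y0 by simp
      with \<open>y*y*_ = 0\<close> have "- ((B$2$1+B$1$2)*(B$2$1+B$1$2)) - (B$1$1-B$2$2)*(B$1$1-B$2$2) = 0"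
        using mult_eq_0_iff by blast
      thus ?thesis by linarith

    qed
    hence "B$2$1+B$1$2 = 0" "B$1$1-B$2$2 = 0"
      by (simp_all add: sum_squares_eq_zero_iff)
    hence "B = (\<chi> i k. if i = k then B$1$1 else if i = 1 then - B$2$1 else B$2$1)"
      unfolding eq2 by simp
    thus "\<exists>s t. matrix_inv S ** A j ** S = (\<chi> i k. if i = k then s else if i = 1 then - t else t)"
      unfolding B_def[symmetric] by blast
  qed
qed

end
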